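(* For sufficiently large $m$, let $G=\mathbb{Z}_2^m\times\mathbb{Z}_4$. Let $t$ be an integer with $3\leq t\leq 0.001f(G)$ and $|I(G)|+2t\equiv 0\pmod 3$, and let $M$ be the multiset consisting of $f(G)-t$ copies of $2$ and $\frac13(|I(G)|+2t)$ copies of $3$. Then $G\setminus\{0\}$ has a zero-sum $M$-partition.
   Context: $I(G)$ is the set of elements of order $2$ in $G$, and $f(G)=(|G|-|I(G)|-1)/2$. A zero-sum $M$-partition of a set $S\subseteq G$ is a partition of $S$ into sets each summing to $0$, such that the multiset of part sizes equals $M$. *)

theory Defs
  imports Complex_Main "HOL-Library.Function_Algebras" "HOL-Library.Product_Plus"
    "HOL-Library.Numeral_Type" "HOL-Library.Disjoint_Sets" "HOL-Library.Multiset"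
begin

text \<open>The group Z_2^m \<times> Z_4 is realised as the subgroup of elements whose first
  component vanishes outside the coordinates 0..m-1.\<close>

type_synonym elt = "(nat \<Rightarrow> 2) \<times> 4"

definition Gm :: "nat \<Rightarrow> elt set" where
  "Gm m = {(v, a). \<forall>i\<ge>m. v i = 0}"

definition I_set :: "'a::monoid_add set \<Rightarrow> 'a set" where
  "I_set G = {g \<in> G. g \<noteq> 0 \<and> g + g = 0}"

text \<open>f(G) = (|G| - |I(G)| - 1)/2 (always an integer for groups of even order).\<close>
definition f_val :: "'a::monoid_add set \<Rightarrow> nat" where
  "f_val G = (card G - card (I_set G) - 1) div 2"

definition zero_sum_partition :: "'a::comm_monoid_add set \<Rightarrow> nat multiset \<Rightarrow> bool" where
  "zero_sum_partition S M \<longleftrightarrow>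
     (\<exists>P. partition_on S P \<and> finite P \<and> (\<forall>X\<in>P. sum id X = 0)
          \<and> image_mset card (mset_set P) = M)"

end

theory Submission imports Defs begin
lemma ex2: "(x::2) = 0 \<or> x = 1"
proof (induct x)
  case (of_int z) then have "z = 0 \<or> z = 1" by simp arith
  then show ?case by auto
qed

lemma ex4: "(x::4) = 0 \<or> x = 1 \<or> x = 2 \<or> x = 3"
proof (induct x)
  case (of_int z) then have "z = 0 \<or> z = 1 \<or> z = 2 \<or> z = 3" by simp arith
  then show ?case by auto
qed

lemma two_2_zero [simp]: "(2::2) = 0" by simp
lemma four_4_zero [simp]: "(4::4) = 0" by simp

lemma two_self [simp]: "(c::2) + c = 0"
  using ex2[of c] by auto

lemma two_eq_iff: "(p::2) + q = 0 \<longleftrightarrow> p = q"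
  using ex2[of p] ex2[of q] by auto

lemma fun2_self [simp]: "(v::nat \<Rightarrow> 2) + v = 0"
  by (simp add: fun_eq_iff)

lemma fun2_two [simp]: "2 * (v::nat \<Rightarrow> 2) = 0"
  by (simp add: fun_eq_iff)

definition Fn :: "nat \<Rightarrow> (nat \<Rightarrow> 2) set" where
  "Fn n = {v. \<forall>k\<ge>n. v k = 0}"

lemma Fn_0: "Fn 0 = {0}"
  by (auto simp: Fn_def fun_eq_iff)

lemma Fn_Suc: "Fn (Suc n) = (\<lambda>(v,c). v(n:=c)) ` (Fn n \<times> UNIV)"
proof
  show "(\<lambda>(v,c). v(n:=c)) ` (Fn n \<times> UNIV) \<subseteq> Fn (Suc n)"
    by (auto simp: Fn_def)
  show "Fn (Suc n) \<subseteq> (\<lambda>(v,c). v(n:=c)) ` (Fn n \<times> UNIV)"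
  proof
    fix w assume w: "w \<in> Fn (Suc n)"
    have "w = (\<lambda>(v,c). v(n:=c)) (w(n:=0), w n)" by auto
    moreover have "(w(n:=0), w n) \<in> Fn n \<times> UNIV" using w
      by (auto simp: Fn_def)
    ultimately show "w \<in> (\<lambda>(v,c). v(n:=c)) ` (Fn n \<times> UNIV)" by blast
  qed
qed

lemma Fn_inj: "inj_on (\<lambda>(v,c). v(n:=c)) (Fn n \<times> (UNIV::2 set))"
proof (rule inj_onI, clarify)
  fix v c v' c'
  assume a: "v \<in> Fn n" "v' \<in> Fn n" and e: "v(n := c) = v'(n := c')"
  have "c = c'" using fun_cong[OF e, of n] by simp
  moreover have "v = v'"
  proof
    fix k show "v k = v' k"
    proof (cases "k = n")
      case True then show ?thesis using a by (simp add: Fn_def)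
    next
      case False then show ?thesis using fun_cong[OF e, of k] by simp
    qed
  qed
  ultimately show "v = v' \<and> c = c'" by simp
qed

lemma Fn_finite_card: "finite (Fn n) \<and> card (Fn n) = 2 ^ n"
proof (induct n)
  case 0 then show ?case by (simp add: Fn_0)
next
  case (Suc n)
  have c2: "card (UNIV :: 2 set) = 2" by simp
  have "finite (Fn n \<times> (UNIV::2 set))" using Suc by simp
  then have "finite (Fn (Suc n))" unfolding Fn_Suc by simp
  moreover have "card (Fn (Suc n)) = card (Fn n \<times> (UNIV::2 set))"
    unfolding Fn_Suc by (rule card_image[OF Fn_inj])
  ultimately show ?case using Suc by (simp add: card_cartesian_product)
qed

lemma Fn_finite: "finite (Fn n)" using Fn_finite_card by blast
lemma Fn_card: "card (Fn n) = 2 ^ n" using Fn_finite_card by blast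

lemma Gm_eq: "Gm m = Fn m \<times> UNIV"
  by (auto simp: Gm_def Fn_def)

lemma Gm_finite: "finite (Gm m)" by (simp add: Gm_eq Fn_finite)

lemma Gm_card: "card (Gm m) = 2 ^ (m + 2)"
  by (simp add: Gm_eq card_cartesian_product Fn_card power_add)

definition Hs :: "nat \<Rightarrow> elt set" where
  "Hs m = Fn m \<times> {0, 2}"

lemma Hs_card: "card (Hs m) = 2 ^ (m + 1)"
  by (simp add: Hs_def card_cartesian_product Fn_card)

lemma four_self_iff: "(a::4) + a = 0 \<longleftrightarrow> a = 0 \<or> a = 2"
  using ex4[of a] by auto

lemma four_self_iff2: "2 * (a::4) = 0 \<longleftrightarrow> a = 0 \<or> a = 2"
  using ex4[of a] by auto

lemma I_set_eq: "I_set (Gm m) = Hs m - {0}"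
  by (auto simp: I_set_def Gm_eq Hs_def four_self_iff2 zero_prod_def)

lemma Hs_sub: "Hs m \<subseteq> Gm m" by (auto simp: Hs_def Gm_eq)

lemma zero_Hs: "0 \<in> Hs m" by (simp add: Hs_def Fn_def zero_prod_def)

lemma I_card: "card (I_set (Gm m)) = 2 ^ (m + 1) - 1"
  using Hs_card[of m] zero_Hs[of m] Fn_finite[of m] by (simp add: I_set_eq Hs_def)

lemma f_val_Gm: "f_val (Gm m) = 2 ^ m"
proof -
  have "(2::nat) ^ (m + 2) - (2 ^ (m + 1) - 1) - 1 = 2 * 2 ^ m"
  proof -
    have "(1::nat) \<le> 2 ^ (m+1)" by simp
    then show ?thesis by (simp add: power_add)
  qed
  then show ?thesis by (simp add: f_val_def Gm_card I_card)
qed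

definition abit :: "4 \<Rightarrow> 2" where "abit a = (if a = 2 then 1 else 0)"
definition obit :: "2 \<Rightarrow> 4" where "obit b = (if b = 1 then 2 else 0)"
definition ev :: "nat \<Rightarrow> nat \<Rightarrow> 2" where "ev k = (\<lambda>i. if i = k then 1 else 0)"

definition sgv :: "nat \<Rightarrow> bool \<Rightarrow> (nat \<Rightarrow> 2) \<Rightarrow> 4 \<Rightarrow> nat \<Rightarrow> 2" where
  "sgv d B v a k = (if k < d then (if even k then v (Suc k) else v (k - 1) + v k)
    else if k = d then abit a else if k = Suc d \<and> B then v d + abit a else 0)"
definition sga :: "nat \<Rightarrow> bool \<Rightarrow> (nat \<Rightarrow> 2) \<Rightarrow> 4 \<Rightarrow> 4" where
  "sga d B v a = obit (if B then v (Suc d) else v d + abit a)"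
definition Sg :: "nat \<Rightarrow> bool \<Rightarrow> elt \<Rightarrow> elt" where
  "Sg d B x = (sgv d B (fst x) (snd x), sga d B (fst x) (snd x))"

definition Ls :: "nat \<Rightarrow> nat \<Rightarrow> nat \<Rightarrow> elt set" where
  "Ls m d i = {x \<in> Hs m. \<forall>k. 2*i \<le> k \<and> k < d \<longrightarrow> fst x k = 0}"

lemma obit_add: "obit (p + q) = obit p + obit q"
  using ex2[of p] ex2[of q] by (auto simp: obit_def)

lemma abit_add: "a \<in> {0,2} \<Longrightarrow> b \<in> {0,2} \<Longrightarrow> abit (a + b) = abit a + abit b"
  by (auto simp: abit_def)

lemma obit_0_iff: "obit p = 0 \<longleftrightarrow> p = 0"
  using ex2[of p] by (auto simp: obit_def)

lemma abit_0_iff: "a \<in> {0,2} \<Longrightarrow> abit a = 0 \<longleftrightarrow> a = 0"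
  by (auto simp: abit_def)

lemma obit_in: "obit p \<in> {0,2}" by (simp add: obit_def)

lemma Hs_mem: "x \<in> Hs m \<longleftrightarrow> (\<forall>k\<ge>m. fst x k = 0) \<and> (snd x = 0 \<or> snd x = 2)"
  by (cases x) (auto simp: Hs_def Fn_def)

lemma Hs_add: "x \<in> Hs m \<Longrightarrow> y \<in> Hs m \<Longrightarrow> x + y \<in> Hs m"
  by (auto simp: Hs_mem)

lemma Hs_double: "x \<in> Hs m \<Longrightarrow> x + x = 0"
  by (cases x) (auto simp: Hs_mem zero_prod_def)

lemma Ls_Hs: "x \<in> Ls m d i \<Longrightarrow> x \<in> Hs m" by (simp add: Ls_def)

lemma Ls_add: "x \<in> Ls m d i \<Longrightarrow> y \<in> Ls m d i \<Longrightarrow> x + y \<in> Ls m d i"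
  by (auto simp: Ls_def Hs_add)

lemma Hs_zeroI: "x \<in> Hs m \<Longrightarrow> (\<And>k. k < m \<Longrightarrow> fst x k = 0) \<Longrightarrow> snd x = 0 \<Longrightarrow> x = 0"
proof -
  assume x: "x \<in> Hs m" and k: "\<And>k. k < m \<Longrightarrow> fst x k = 0" and a: "snd x = 0"
  have "fst x k = 0" for k using x k[of k] by (cases "k < m") (auto simp: Hs_mem)
  then show "x = 0" using a by (cases x) (auto simp: zero_prod_def fun_eq_iff)
qed

locale cfg = fixes m d :: nat and B :: bool
  assumes d_even: "even d" and d_ge: "2 \<le> d" and mB: "m = (if B then d + 2 else d + 1)"
begin

lemma Sg_Hs: "x \<in> Hs m \<Longrightarrow> Sg d B x \<in> Hs m"
  using mB by (auto simp: Hs_mem Sg_def sgv_def sga_def obit_def)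

lemma Sg_Ls: assumes "x \<in> Ls m d i" shows "Sg d B x \<in> Ls m d i"
proof -
  have "x \<in> Hs m" using assms by (simp add: Ls_def)
  moreover
  have "fst (Sg d B x) k = 0" if k: "2*i \<le> k" "k < d" for k
  proof (cases "even k")
    case True
    then have "Suc k < d" using k d_even by (metis Suc_lessI even_Suc)
    then show ?thesis using assms k True by (simp add: Sg_def sgv_def Ls_def)
  next
    case False
    then have "2*i \<le> k - 1" using k by presburger
    then show ?thesis using assms k False by (simp add: Sg_def sgv_def Ls_def)
  qed
  ultimately show ?thesis by (simp add: Ls_def Sg_Hs)
qed

lemma Sg_add: assumes "x \<in> Hs m" "y \<in> Hs m" shows "Sg d B (x + y) = Sg d B x + Sg d B y"
proof -
  have ab: "snd x \<in> {0,2}" "snd y \<in> {0,2}" using assms by (auto simp: Hs_mem)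
  show ?thesis
    by (simp add: Sg_def sgv_def sga_def fun_eq_iff abit_add[OF ab] obit_add algebra_simps)
qed

lemma Sg_zero: assumes x: "x \<in> Hs m" and z: "Sg d B x = 0" shows "x = 0"
proof -
  obtain v a where xv: "x = (v, a)" by (cases x)
  have a2: "a \<in> {0,2}" using x xv by (auto simp: Hs_mem)
  have sv: "sgv d B v a k = 0" for k using z xv by (simp add: Sg_def zero_prod_def fun_eq_iff)
  have sa: "sga d B v a = 0" using z xv by (simp add: Sg_def zero_prod_def)
  have "abit a = 0" using sv[of d] by (simp add: sgv_def)
  then have a0: "a = 0" using a2 abit_0_iff by blast
  have vk: "v k = 0" if "k < m" for k
  proof -
    have "(k < d \<and> even k) \<or> (k < d \<and> odd k) \<or> k = d \<or> (k = Suc d \<and> B)"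
      using that mB by (cases B) auto
    then consider "k < d \<and> even k" | "k < d \<and> odd k" | "k = d" | "k = Suc d \<and> B"
      by blast
    then show ?thesis
    proof cases
      case 1
      then have "Suc k < d" using d_even by (metis Suc_lessI even_Suc)
      then have "v (Suc k) = 0" "v k + v (Suc k) = 0"
        using sv[of k] sv[of "Suc k"] 1 by (simp_all add: sgv_def)
      then show ?thesis by simp
    next
      case 2
      then have "Suc (k - 1) = k" "k - 1 < d" "even (k - 1)" by presburger+
      then show ?thesis using sv[of "k - 1"] by (simp add: sgv_def)
    next
      case 3
      then show ?thesis
      proof (cases B)
        case True then show ?thesis using sv[of "Suc d"] 3 a0 by (simp add: sgv_def abit_def)
      next
        case False then show ?thesis using sa 3 a0 by (simp add: sga_def abit_def obit_0_iff)
      qed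
    next
      case 4 then show ?thesis using sa by (simp add: sga_def obit_0_iff)
    qed
  qed
  show ?thesis using x vk a0 xv by (intro Hs_zeroI) auto
qed

lemma Sg1_zero: assumes x: "x \<in> Hs m" and z: "x + Sg d B x = 0" shows "x = 0"
proof -
  obtain v a where xv: "x = (v, a)" by (cases x)
  have a2: "a \<in> {0,2}" using x xv by (auto simp: Hs_mem)
  have sv: "v k + sgv d B v a k = 0" for k using z xv by (simp add: Sg_def zero_prod_def fun_eq_iff)
  have sa: "a + sga d B v a = 0" using z xv by (simp add: Sg_def zero_prod_def)
  have vd: "v d + abit a = 0" using sv[of d] by (simp add: sgv_def)
  have ev0: "v k = 0" if "k < d" "even k" for k
  proof -
    have "Suc k < d" using that d_even by (metis Suc_lessI even_Suc)
    then have "v (Suc k) + (v k + v (Suc k)) = 0" using sv[of "Suc k"] that by (simp add: sgv_def)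
    then show ?thesis by (simp add: add.assoc[symmetric] add.commute[of "v (Suc k)"])
  qed
  have a0: "a = 0"
  proof (cases B)
    case True
    then have "v (Suc d) + (v d + abit a) = 0" using sv[of "Suc d"] by (simp add: sgv_def)
    then have "v (Suc d) = 0" using vd by simp
    then show ?thesis using sa True by (simp add: sga_def obit_def)
  next
    case False
    then show ?thesis using sa vd by (simp add: sga_def obit_def)
  qed
  have vk: "v k = 0" if "k < m" for k
  proof -
    have "(k < d \<and> even k) \<or> (k < d \<and> odd k) \<or> k = d \<or> (k = Suc d \<and> B)"
      using that mB by (cases B) auto
    then consider "k < d \<and> even k" | "k < d \<and> odd k" | "k = d" | "k = Suc d \<and> B"
      by blast
    then show ?thesis
    proof cases
      case 1 then show ?thesis using ev0 by blast
    next
      case 2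
      then have "Suc (k - 1) = k" "k - 1 < d" "even (k - 1)" by presburger+
      then have "v (k - 1) = 0" using ev0 by blast
      then show ?thesis using sv[of "k - 1"] 2 \<open>Suc (k - 1) = k\<close> \<open>even (k - 1)\<close> \<open>k - 1 < d\<close>
        by (simp add: sgv_def)
    next
      case 3 then show ?thesis using vd a0 by (simp add: abit_def)
    next
      case 4
      then have "v (Suc d) + (v d + abit a) = 0" using sv[of "Suc d"] by (simp add: sgv_def)
      then show ?thesis using vd 4 by simp
    qed
  qed
  show ?thesis using x vk a0 xv by (intro Hs_zeroI) auto
qed

end

lemma PIMG:
  assumes "\<And>x. x \<in> I \<Longrightarrow> F x \<noteq> {}"
    and "\<And>x y z. x \<in> I \<Longrightarrow> y \<in> I \<Longrightarrow> z \<in> F x \<Longrightarrow> z \<in> F y \<Longrightarrow> x = y"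
  shows "partition_on (\<Union>(F ` I)) (F ` I)"
  unfolding partition_on_def disjoint_def using assms by fastforce

lemma PU:
  assumes "partition_on A P" "partition_on B Q" "A \<inter> B = {}"
  shows "partition_on (A \<union> B) (P \<union> Q)"
proof -
  have "\<Union>P = A" "disjoint P" "{} \<notin> P" "\<Union>Q = B" "disjoint Q" "{} \<notin> Q"
    using assms(1,2) by (simp_all add: partition_on_def)
  then show ?thesis using assms(3) by (simp add: partition_on_def disjoint_union)
qed

lemma PDIFF:
  assumes "partition_on S P" "Q \<subseteq> P"
  shows "partition_on (S - \<Union>Q) (P - Q)"
proof -
  have U: "\<Union>P = S" and D: "disjoint P" and E: "{} \<notin> P"
    using assms(1) by (simp_all add: partition_on_def)
  have "\<Union>(P - Q) = S - \<Union>Q"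
  proof
    show "\<Union>(P - Q) \<subseteq> S - \<Union>Q"
    proof
      fix x assume "x \<in> \<Union>(P - Q)"
      then obtain X where X: "X \<in> P" "X \<notin> Q" "x \<in> X" by blast
      have "x \<notin> Y" if Y: "Y \<in> Q" for Y
      proof
        assume "x \<in> Y"
        moreover have "X \<inter> Y = {}" using disjointD[OF D X(1)] Y assms(2) X(2) by blast
        ultimately show False using X(3) by blast
      qed
      then show "x \<in> S - \<Union>Q" using X U by blast
    qed
    show "S - \<Union>Q \<subseteq> \<Union>(P - Q)" using U by blast
  qed
  moreover have "disjoint (P - Q)" using D by (rule pairwise_subset) blast
  ultimately show ?thesis using E by (simp add: partition_on_def)
qed

lemma PUN:
  assumes "\<And>i. i \<in> I \<Longrightarrow> partition_on (S i) (P i)"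
    and "\<And>i j. i \<in> I \<Longrightarrow> j \<in> I \<Longrightarrow> i \<noteq> j \<Longrightarrow> S i \<inter> S j = {}"
  shows "partition_on (\<Union>i\<in>I. S i) (\<Union>i\<in>I. P i)"
proof -
  have U: "\<Union>(\<Union>i\<in>I. P i) = (\<Union>i\<in>I. S i)" using assms(1) unfolding partition_on_def by blast
  have "disjoint (\<Union>i\<in>I. P i)"
  proof (rule disjointI)
    fix X Y assume X: "X \<in> (\<Union>i\<in>I. P i)" and Y: "Y \<in> (\<Union>i\<in>I. P i)" and ne: "X \<noteq> Y"
    then obtain i j where i: "i \<in> I" "X \<in> P i" and j: "j \<in> I" "Y \<in> P j" by blast
    show "X \<inter> Y = {}"
    proof (cases "i = j")
      case True then show ?thesis using assms(1)[OF i(1)] i j ne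
        unfolding partition_on_def disjoint_def by blast
    next
      case False
      have "X \<subseteq> S i" "Y \<subseteq> S j" using assms(1)[OF i(1)] assms(1)[OF j(1)] i j
        unfolding partition_on_def by blast+
      then show ?thesis using assms(2)[OF i(1) j(1) False] by blast
    qed
  qed
  moreover have "{} \<notin> (\<Union>i\<in>I. P i)" using assms(1) unfolding partition_on_def by blast
  ultimately show ?thesis using U unfolding partition_on_def by blast
qed

definition Bv :: "nat \<Rightarrow> elt" where "Bv k = (ev k, 0)"
definition tri :: "nat \<Rightarrow> bool \<Rightarrow> nat \<Rightarrow> elt \<Rightarrow> elt set" where
  "tri d B i x = {x + Bv (2*i), Sg d B x + Bv (Suc (2*i)), x + Sg d B x + (Bv (2*i) + Bv (Suc (2*i)))}"

lemma Hs_eq_of_sum: "x \<in> Hs m \<Longrightarrow> y \<in> Hs m \<Longrightarrow> x + y = 0 \<Longrightarrow> x = y"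
proof -
  assume a: "x \<in> Hs m" "y \<in> Hs m" "x + y = 0"
  have "x = x + (y + y)" using Hs_double[OF a(2)] by simp
  also have "\<dots> = (x + y) + y" by (simp add: add.assoc)
  finally show "x = y" using a(3) by simp
qed

lemma Ls_mono: "i \<le> i' \<Longrightarrow> Ls m d i \<subseteq> Ls m d i'"
  by (auto simp: Ls_def)

lemma Ls_finite: "finite (Ls m d i)"
  by (rule finite_subset[OF _ Gm_finite[of m]]) (auto simp: Ls_def Hs_sub[THEN subsetD])

lemma Ls_memI: "x \<in> Hs m \<Longrightarrow> (\<And>k. 2*i \<le> k \<Longrightarrow> k < d \<Longrightarrow> fst x k = 0) \<Longrightarrow> x \<in> Ls m d i"
  by (simp add: Ls_def)

lemma Bv_Hs: "k < m \<Longrightarrow> Bv k \<in> Hs m"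
  by (auto simp: Bv_def Hs_mem ev_def)

context cfg
begin

lemma Sg_inj: "inj_on (Sg d B) (Hs m)"
proof (rule inj_onI)
  fix x y assume x: "x \<in> Hs m" and y: "y \<in> Hs m" and e: "Sg d B x = Sg d B y"
  have "Sg d B (x + y) = Sg d B x + Sg d B y" by (rule Sg_add[OF x y])
  also have "\<dots> = 0" using e Hs_double[OF Sg_Hs[OF y]] by simp
  finally have "x + y = 0" using Sg_zero Hs_add[OF x y] by blast
  then show "x = y" using Hs_eq_of_sum x y by blast
qed

lemma Sg1_inj: "inj_on (\<lambda>x. x + Sg d B x) (Hs m)"
proof (rule inj_onI)
  fix x y assume x: "x \<in> Hs m" and y: "y \<in> Hs m" and e: "x + Sg d B x = y + Sg d B y"
  have "(x + y) + Sg d B (x + y) = (x + Sg d B x) + (y + Sg d B y)"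
    by (simp add: Sg_add[OF x y] ac_simps)
  also have "\<dots> = 0" using e Hs_double[OF Hs_add[OF y Sg_Hs[OF y]]] by simp
  finally have "x + y = 0" using Sg1_zero Hs_add[OF x y] by blast
  then show "x = y" using Hs_eq_of_sum x y by blast
qed

lemma Sg_surj: "Sg d B ` Ls m d i = Ls m d i"
proof (rule endo_inj_surj[OF Ls_finite])
  show "Sg d B ` Ls m d i \<subseteq> Ls m d i" using Sg_Ls by blast
  show "inj_on (Sg d B) (Ls m d i)" by (rule inj_on_subset[OF Sg_inj]) (auto simp: Ls_def)
qed

lemma Sg1_surj: "(\<lambda>x. x + Sg d B x) ` Ls m d i = Ls m d i"
proof (rule endo_inj_surj[OF Ls_finite])
  show "(\<lambda>x. x + Sg d B x) ` Ls m d i \<subseteq> Ls m d i" using Sg_Ls Ls_add by blast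
  show "inj_on (\<lambda>x. x + Sg d B x) (Ls m d i)" by (rule inj_on_subset[OF Sg1_inj]) (auto simp: Ls_def)
qed

lemma j_facts: assumes "i < d div 2" shows "Suc (2*i) < d" "2*i < d" "Suc (2*i) < m" "2 * i < m"
proof -
  show a: "Suc (2*i) < d" using assms d_even by (auto elim!: evenE)
  then show "2*i < d" by simp
  show "Suc (2*i) < m" using a mB by auto
  then show "2*i < m" by simp
qed

lemma tri_cancel:
  assumes w: "w \<in> Ls m d i" and w': "w' \<in> Ls m d i" and i: "i < d div 2"
  shows "w + Bv (2*i) \<noteq> w' + Bv (Suc (2*i))"
    "w + Bv (2*i) \<noteq> w' + (Bv (2*i) + Bv (Suc (2*i)))"
    "w + Bv (Suc (2*i)) \<noteq> w' + (Bv (2*i) + Bv (Suc (2*i)))"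
proof -
  have p: "fst w (2*i) = 0" "fst w' (2*i) = 0" "fst w (Suc (2*i)) = 0" "fst w' (Suc (2*i)) = 0"
    using w w' j_facts[OF i] by (auto simp: Ls_def)
  show "w + Bv (2*i) \<noteq> w' + Bv (Suc (2*i))"
  proof
    assume "w + Bv (2*i) = w' + Bv (Suc (2*i))"
    then have "fst (w + Bv (2*i)) (2*i) = fst (w' + Bv (Suc (2*i))) (2*i)" by simp
    then show False using p by (simp add: Bv_def ev_def)
  qed
  show "w + Bv (2*i) \<noteq> w' + (Bv (2*i) + Bv (Suc (2*i)))"
  proof
    assume "w + Bv (2*i) = w' + (Bv (2*i) + Bv (Suc (2*i)))"
    then have "fst (w + Bv (2*i)) (Suc (2*i)) = fst (w' + (Bv (2*i) + Bv (Suc (2*i)))) (Suc (2*i))" by simp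
    then show False using p by (simp add: Bv_def ev_def)
  qed
  show "w + Bv (Suc (2*i)) \<noteq> w' + (Bv (2*i) + Bv (Suc (2*i)))"
  proof
    assume "w + Bv (Suc (2*i)) = w' + (Bv (2*i) + Bv (Suc (2*i)))"
    then have "fst (w + Bv (Suc (2*i))) (2*i) = fst (w' + (Bv (2*i) + Bv (Suc (2*i)))) (2*i)" by simp
    then show False using p by (simp add: Bv_def ev_def)
  qed
qed

lemma tri_disj:
  assumes x: "x \<in> Ls m d i" and y: "y \<in> Ls m d i" and i: "i < d div 2"
    and z: "z \<in> tri d B i x" "z \<in> tri d B i y"
  shows "x = y"
proof -
  have sx: "Sg d B x \<in> Ls m d i" "Sg d B y \<in> Ls m d i" using x y by (auto intro: Sg_Ls)
  have tx: "x + Sg d B x \<in> Ls m d i" "y + Sg d B y \<in> Ls m d i" using x y sx by (auto intro: Ls_add)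
  note c = tri_cancel[OF _ _ i]
  have xH: "x \<in> Hs m" "y \<in> Hs m" using x y by (auto simp: Ls_def)
  from z show ?thesis unfolding tri_def
    using c[OF x y] c[OF y x] c[OF x sx(2)] c[OF sx(2) x] c[OF y sx(1)] c[OF sx(1) y]
      c[OF x tx(2)] c[OF tx(2) x] c[OF y tx(1)] c[OF tx(1) y]
      c[OF sx(1) tx(2)] c[OF tx(2) sx(1)] c[OF sx(2) tx(1)] c[OF tx(1) sx(2)]
      inj_onD[OF Sg_inj _ xH] inj_onD[OF Sg1_inj _ xH]
    by (auto simp: add.assoc)
qed

lemma tri_sub: assumes x: "x \<in> Ls m d i" and i: "i < d div 2"
  shows "tri d B i x \<subseteq> Ls m d (Suc i) - Ls m d i"
proof -
  have sx: "Sg d B x \<in> Ls m d (Suc i)" "x \<in> Ls m d (Suc i)"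
    using Sg_Ls[OF x] x Ls_mono[of i "Suc i"] by auto
  have b: "Bv (2*i) \<in> Ls m d (Suc i)" "Bv (Suc (2*i)) \<in> Ls m d (Suc i)"
    by (rule Ls_memI, rule Bv_Hs, use j_facts[OF i] in simp, simp add: Bv_def ev_def)+
  have "tri d B i x \<subseteq> Ls m d (Suc i)" unfolding tri_def using sx b by (auto intro!: Ls_add)
  moreover have "z \<notin> Ls m d i" if "z \<in> tri d B i x" for z
  proof
    assume z: "z \<in> Ls m d i"
    have p: "fst x (2*i) = 0" "fst (Sg d B x) (2*i) = 0" "fst x (Suc (2*i)) = 0"
      "fst (Sg d B x) (Suc (2*i)) = 0" "fst z (2*i) = 0" "fst z (Suc (2*i)) = 0"
      using x Sg_Ls[OF x] z j_facts[OF i] by (auto simp: Ls_def)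
    show False using that p by (auto simp: tri_def Bv_def ev_def)
  qed
  ultimately show ?thesis by blast
qed

lemma tri_cover: assumes z: "z \<in> Ls m d (Suc i) - Ls m d i" and i: "i < d div 2"
  shows "\<exists>x\<in>Ls m d i. z \<in> tri d B i x"
proof -
  define p where "p = 2 * i"
  define q where "q = Suc (2 * i)"
  define w where "w = ((\<lambda>k. if k = p \<or> k = q then 0 else fst z k), snd z)"
  have zH: "z \<in> Hs m" and zL: "\<And>k. 2 * Suc i \<le> k \<Longrightarrow> k < d \<Longrightarrow> fst z k = 0"
    using z by (auto simp: Ls_def)
  have wL: "w \<in> Ls m d i" using zH zL j_facts[OF i]
    by (auto simp: Ls_def w_def Hs_mem p_def q_def)
  have nz: "fst z p \<noteq> 0 \<or> fst z q \<noteq> 0"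
  proof (rule ccontr)
    assume "\<not> ?thesis"
    then have z0: "fst z (2*i) = 0" "fst z (Suc (2*i)) = 0" by (simp_all add: p_def q_def)
    have "fst z k = 0" if k: "2*i \<le> k" "k < d" for k
    proof -
      have "k = 2*i \<or> k = Suc (2*i) \<or> 2 * Suc i \<le> k" using k by presburger
      then consider "k = 2*i" | "k = Suc (2*i)" | "2 * Suc i \<le> k" by blast
      then show ?thesis by cases (use z0 zL k in auto)
    qed
    then have "z \<in> Ls m d i" using zH by (simp add: Ls_def)
    then show False using z by blast
  qed
  have pq: "p \<noteq> q" by (simp add: p_def q_def)
  consider "fst z p = 1" "fst z q = 0" | "fst z p = 0" "fst z q = 1" | "fst z p = 1" "fst z q = 1"
    using nz ex2[of "fst z p"] ex2[of "fst z q"] by blast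
  then show ?thesis
  proof cases
    case 1
    then have "z = w + Bv p" using pq
      by (intro prod_eqI) (auto simp: w_def Bv_def ev_def fun_eq_iff)
    then show ?thesis using wL by (auto simp: tri_def p_def)
  next
    case 2
    then have e: "z = w + Bv q" using pq
      by (intro prod_eqI) (auto simp: w_def Bv_def ev_def fun_eq_iff)
    obtain y where y: "y \<in> Ls m d i" "w = Sg d B y" using wL Sg_surj[of i] by (metis imageE)
    show ?thesis using y e by (auto simp: tri_def q_def)
  next
    case 3
    then have e: "z = w + (Bv p + Bv q)" using pq
      by (intro prod_eqI) (auto simp: w_def Bv_def ev_def fun_eq_iff)
    obtain y where y: "y \<in> Ls m d i" "w = y + Sg d B y" using wL Sg1_surj[of i]
      by (metis (no_types, lifting) imageE)
    show ?thesis using y e by (auto simp: tri_def p_def q_def)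
  qed
qed

lemma tri_part: assumes i: "i < d div 2"
  shows "partition_on (Ls m d (Suc i) - Ls m d i) (tri d B i ` Ls m d i)"
proof -
  have "partition_on (\<Union>(tri d B i ` Ls m d i)) (tri d B i ` Ls m d i)"
    by (rule PIMG) (auto simp: tri_def dest: tri_disj[OF _ _ i])
  moreover have "\<Union>(tri d B i ` Ls m d i) = Ls m d (Suc i) - Ls m d i"
    using tri_sub[OF _ i] tri_cover[OF _ i] by blast
  ultimately show ?thesis by simp
qed

lemma gen_part: "i \<le> d div 2 \<Longrightarrow>
  partition_on (Ls m d i - Ls m d 0) (\<Union>i'<i. tri d B i' ` Ls m d i')"
proof (induct i)
  case 0 then show ?case by (simp add: partition_on_empty)
next
  case (Suc i)
  have e: "Ls m d (Suc i) - Ls m d 0 = (Ls m d i - Ls m d 0) \<union> (Ls m d (Suc i) - Ls m d i)"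
    using Ls_mono[of 0 i m d] Ls_mono[of i "Suc i" m d] by auto
  have e2: "(\<Union>i'<Suc i. tri d B i' ` Ls m d i') = (\<Union>i'<i. tri d B i' ` Ls m d i') \<union> tri d B i ` Ls m d i"
    by (auto simp: lessThan_Suc)
  show ?case unfolding e e2
    by (rule PU) (use Suc tri_part[of i] in auto)
qed

lemma Ls_top: "Ls m d (d div 2) = Hs m"
  using d_even by (auto simp: Ls_def)

lemma tri_card: assumes x: "x \<in> Ls m d i" and i: "i < d div 2" shows "card (tri d B i x) = 3"
proof -
  have sx: "Sg d B x \<in> Ls m d i" "x + Sg d B x \<in> Ls m d i" using x Sg_Ls[OF x] by (auto intro: Ls_add)
  show ?thesis unfolding tri_def
    using tri_cancel[OF x sx(1) i] tri_cancel[OF x sx(2) i] tri_cancel[OF sx(1) sx(2) i]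
    by (simp add: add.assoc)
qed

lemma tri_sum: assumes x: "x \<in> Ls m d i" and i: "i < d div 2" shows "sum id (tri d B i x) = 0"
proof -
  have sx: "Sg d B x \<in> Ls m d i" "x + Sg d B x \<in> Ls m d i" using x Sg_Ls[OF x] by (auto intro: Ls_add)
  have H: "x \<in> Hs m" "Sg d B x \<in> Hs m" "Bv (2*i) \<in> Hs m" "Bv (Suc (2*i)) \<in> Hs m"
    using x sx j_facts[OF i] by (auto simp: Ls_def Bv_Hs)
  let ?a = "x + Bv (2*i)" let ?b = "Sg d B x + Bv (Suc (2*i))"
  let ?c = "x + Sg d B x + (Bv (2*i) + Bv (Suc (2*i)))"
  have dist: "?a \<noteq> ?b" "?a \<noteq> ?c" "?b \<noteq> ?c"
    using tri_cancel[OF x sx(1) i] tri_cancel[OF x sx(2) i] tri_cancel[OF sx(1) sx(2) i]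
    by (simp_all add: add.assoc)
  have "sum id (tri d B i x) = ?a + (?b + ?c)" unfolding tri_def using dist by simp
  also have "\<dots> = (x + x) + (Sg d B x + Sg d B x) + (Bv (2*i) + Bv (2*i)) + (Bv (Suc (2*i)) + Bv (Suc (2*i)))"
    by (simp add: ac_simps)
  also have "\<dots> = 0" using Hs_double[OF H(1)] Hs_double[OF H(2)] Hs_double[OF H(3)] Hs_double[OF H(4)]
    by simp
  finally show ?thesis .
qed

end

lemma zsp_from:
  fixes S :: "'a::comm_monoid_add set"
  assumes fin: "finite S" and P: "partition_on S P" and z: "\<forall>X\<in>P. sum id X = 0"
    and c23: "\<forall>X\<in>P. card X = 2 \<or> card X = 3"
    and p: "card {X\<in>P. card X = 2} = p" and pq: "2 * p + 3 * q = card S"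
  shows "zero_sum_partition S (replicate_mset p 2 + replicate_mset q 3)"
proof -
  have finP: "finite P" using finite_elements[OF fin P] .
  define P2 where "P2 = {X\<in>P. card X = 2}"
  define P3 where "P3 = {X\<in>P. card X = 3}"
  have PU: "P = P2 \<union> P3" and Pd: "P2 \<inter> P3 = {}" using c23 by (auto simp: P2_def P3_def)
  have f23: "finite P2" "finite P3" using finP by (auto simp: P2_def P3_def)
  have finX: "\<And>X. X \<in> P \<Longrightarrow> finite X"
    using P fin unfolding partition_on_def by (meson Union_upper finite_subset)
  have "card S = card (\<Union>P)" using P by (simp add: partition_on_def)
  also have "\<dots> = sum card P"
    using P finX by (intro card_Union_disjoint) (auto simp: partition_on_def disjoint_def pairwise_def disjnt_def)
  also have "\<dots> = sum card P2 + sum card P3" unfolding PU using f23 Pd by (rule sum.union_disjoint)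
  also have "sum card P2 = 2 * card P2" by (simp add: P2_def)
  also have "sum card P3 = 3 * card P3" by (simp add: P3_def)
  finally have "card S = 2 * card P2 + 3 * card P3" .
  then have q: "card P3 = q" using pq p by (simp add: P2_def)
  have "image_mset card (mset_set P) = image_mset card (mset_set P2) + image_mset card (mset_set P3)"
    unfolding PU using f23 Pd by (simp add: mset_set_Union)
  also have "image_mset card (mset_set P2) = image_mset (\<lambda>_. 2) (mset_set P2)"
    by (rule image_mset_cong) (use f23 in \<open>auto simp: P2_def\<close>)
  also have "image_mset card (mset_set P3) = image_mset (\<lambda>_. 3) (mset_set P3)"
    by (rule image_mset_cong) (use f23 in \<open>auto simp: P3_def\<close>)
  finally have "image_mset card (mset_set P) = replicate_mset p 2 + replicate_mset q 3"
    using p q by (simp add: image_mset_const_eq P2_def)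
  then show ?thesis unfolding zero_sum_partition_def using P finP z by blast
qed

lemma fun2_self2 [simp]: "(v::nat \<Rightarrow> 2) + (v + w) = w"
  by (simp add: add.assoc[symmetric])

definition pr :: "(nat \<Rightarrow> 2) \<Rightarrow> elt set" where "pr v = {(v, 1), (v, 3)}"

definition mixf :: "(nat \<Rightarrow> 2) \<Rightarrow> (nat \<Rightarrow> 2) \<Rightarrow> (nat \<Rightarrow> 2) \<Rightarrow> elt set set" where
  "mixf q1 q2 q3 = {{(q2,1),(q3,3),(q1,0)}, {(q3,1),(q1,3),(q2,0)}, {(q1,1),(q2,3),(q3,0)}}"

lemma pr_card: "card (pr v) = 2" by (simp add: pr_def)
lemma pr_sum: "sum id (pr v) = 0" by (simp add: pr_def zero_prod_def)
lemma pr_inj: "z \<in> pr v \<Longrightarrow> z \<in> pr w \<Longrightarrow> v = w" by (auto simp: pr_def)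


lemma MIXL:
  assumes d: "q1 \<noteq> q2" "q1 \<noteq> q3" "q2 \<noteq> q3" and s: "q1 + q2 + q3 = 0"
  shows "partition_on ({(q1,0),(q2,0),(q3,0)} \<union> pr q1 \<union> pr q2 \<union> pr q3) (mixf q1 q2 q3)"
    "\<And>X. X \<in> mixf q1 q2 q3 \<Longrightarrow> card X = 3 \<and> sum id X = 0"
    "finite (mixf q1 q2 q3)"
proof -
  show "partition_on ({(q1,0),(q2,0),(q3,0)} \<union> pr q1 \<union> pr q2 \<union> pr q3) (mixf q1 q2 q3)"
    unfolding partition_on_def mixf_def pr_def using d
    by (simp add: pairwise_insert disjnt_def) (auto)
  have s1: "q2 + (q3 + q1) = 0" "q3 + (q1 + q2) = 0" "q1 + (q2 + q3) = 0"
    using s by (simp_all add: ac_simps)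
  show "\<And>X. X \<in> mixf q1 q2 q3 \<Longrightarrow> card X = 3 \<and> sum id X = 0"
  proof -
    fix X assume "X \<in> mixf q1 q2 q3"
    then consider "X = {(q2,1),(q3,3),(q1,0)}" | "X = {(q3,1),(q1,3),(q2,0)}" | "X = {(q1,1),(q2,3),(q3,0)}"
      unfolding mixf_def by blast
    then show "card X = 3 \<and> sum id X = 0"
      by cases (simp_all add: s1 zero_prod_def)
  qed
  show "finite (mixf q1 q2 q3)" by (simp add: mixf_def)
qed

definition baseB :: "(nat \<Rightarrow> 2) \<Rightarrow> (nat \<Rightarrow> 2) \<Rightarrow> elt set set" where
  "baseB x y = {{(0,1),(x,1),(x,2)}, {(x,3),(y,3),(x+y,2)}, {(y,1),(x+y,3),(x,0)},
     {(x+y,1),(0,3),(x+y,0)}, {(0,2),(y,0),(y,2)}}"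

lemma pw_ins: "(\<And>B. B \<in> S \<Longrightarrow> disjnt A B) \<Longrightarrow> pairwise disjnt S \<Longrightarrow> pairwise disjnt (insert A S)"
  by (auto simp: pairwise_insert disjnt_sym)

lemma BB1:
  fixes x y :: "nat \<Rightarrow> 2"
  assumes d: "x \<noteq> 0" "y \<noteq> 0" "x \<noteq> y" and d2: "x + y \<noteq> 0" "x + y \<noteq> x" "x + y \<noteq> y"
  shows "\<Union>(baseB x y) = {(x,0),(y,0),(x+y,0),(0,2),(x,2),(y,2),(x+y,2)} \<union> pr 0 \<union> pr x \<union> pr y \<union> pr (x+y)"
  unfolding baseB_def pr_def by auto

lemma BB2:
  fixes x y :: "nat \<Rightarrow> 2"
  assumes d: "x \<noteq> 0" "y \<noteq> 0" "x \<noteq> y" and d2: "x + y \<noteq> 0" "x + y \<noteq> x" "x + y \<noteq> y"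
  shows "disjoint (baseB x y)"
  unfolding baseB_def
  by (intro pw_ins pairwise_empty) (auto simp: disjnt_def d d2 d[symmetric] d2[symmetric])
lemma t1: "(x::nat\<Rightarrow>2) + (y + (x + y)) = 0"
  by (simp only: add.commute[of x y] fun2_self2 fun2_self)
lemma t2: "(y::nat\<Rightarrow>2) + (x + y + x) = 0"
  by (simp only: add.commute[of x y] add.assoc fun2_self2 fun2_self)
lemma c1: "(x::nat\<Rightarrow>2) \<noteq> 0 \<Longrightarrow> card {((0::nat\<Rightarrow>2),1::4),(x,1),(x,2)} = 3 \<and> sum id {((0::nat\<Rightarrow>2),1::4),(x,1),(x,2)} = 0"
  by (simp add: zero_prod_def)
lemma c2: "(x::nat\<Rightarrow>2) \<noteq> y \<Longrightarrow> card {(x,3::4),(y,3),(x+y,2)} = 3 \<and> sum id {(x,3::4),(y,3),(x+y,2)} = 0"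
  by (simp add: zero_prod_def t1)
lemma c3: "card {(y,1::4),(x+y,3),(x::nat\<Rightarrow>2,0)} = 3 \<and> sum id {(y,1::4),(x+y,3),(x::nat\<Rightarrow>2,0)} = 0"
  by (simp add: zero_prod_def t2)
lemma c4: "card {(x+y,1::4),(0,3),(x+y::nat\<Rightarrow>2,0)} = 3 \<and> sum id {(x+y,1::4),(0,3),(x+y::nat\<Rightarrow>2,0)} = 0"
  by (simp add: zero_prod_def)
lemma c5: "y \<noteq> 0 \<Longrightarrow> card {(0,2::4),(y,0),(y::nat\<Rightarrow>2,2)} = 3 \<and> sum id {(0,2::4),(y,0),(y::nat\<Rightarrow>2,2)} = 0"
  by (simp add: zero_prod_def)

lemma BASEBL:
  fixes x y :: "nat \<Rightarrow> 2"
  assumes d: "x \<noteq> 0" "y \<noteq> 0" "x \<noteq> y"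
  shows "partition_on ({(x,0),(y,0),(x+y,0),(0,2),(x,2),(y,2),(x+y,2)} \<union> pr 0 \<union> pr x \<union> pr y \<union> pr (x+y)) (baseB x y)"
    "\<And>X. X \<in> baseB x y \<Longrightarrow> card X = 3 \<and> sum id X = 0"
    "finite (baseB x y)"
proof -
  have d2: "x + y \<noteq> 0" "x + y \<noteq> x" "x + y \<noteq> y"
  proof -
    show "x + y \<noteq> 0"
    proof
      assume e: "x + y = 0"
      have "x = y"
      proof (rule ext)
        fix k show "x k = y k" using fun_cong[OF e, of k] by (simp add: two_eq_iff)
      qed
      then show False using d(3) by simp
    qed
    show "x + y \<noteq> x" using d(2) by simp
    show "x + y \<noteq> y" using d(1) by simp
  qed
  show "partition_on ({(x,0),(y,0),(x+y,0),(0,2),(x,2),(y,2),(x+y,2)} \<union> pr 0 \<union> pr x \<union> pr y \<union> pr (x+y)) (baseB x y)"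
  proof -
    have "{} \<notin> baseB x y" by (simp add: baseB_def)
    then show ?thesis unfolding partition_on_def using BB1[OF d d2] BB2[OF d d2] by blast
  qed
  show "\<And>X. X \<in> baseB x y \<Longrightarrow> card X = 3 \<and> sum id X = 0"
  proof -
    fix X assume "X \<in> baseB x y"
    then consider "X = {(0,1),(x,1),(x,2)}" | "X = {(x,3),(y,3),(x+y,2)}" | "X = {(y,1),(x+y,3),(x,0)}"
      | "X = {(x+y,1),(0,3),(x+y,0)}" | "X = {(0,2),(y,0),(y,2)}"
      unfolding baseB_def by (simp only: insert_iff empty_iff) meson
    then show "card X = 3 \<and> sum id X = 0"
    proof cases
      case 1 then show ?thesis using c1[OF d(1)] by simp
    next
      case 2 then show ?thesis using c2[OF d(3)] by simp
    next
      case 3 then show ?thesis using c3 by simp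
    next
      case 4 then show ?thesis using c4 by simp
    next
      case 5 then show ?thesis using c5[OF d(2)] by simp
    qed
  qed
  show "finite (baseB x y)" by (simp add: baseB_def)
qed

lemma vec_d1: assumes "\<forall>k\<ge>Suc d. v k = 0" "\<forall>k<d. (v::nat\<Rightarrow>2) k = 0"
  shows "v = 0 \<or> v = ev d"
proof (cases "v d = 0")
  case True
  then have "v = 0" using assms by (auto simp: fun_eq_iff) (metis linorder_neqE_nat Suc_leI)
  then show ?thesis by simp
next
  case False
  then have "v d = 1" using ex2[of "v d"] by auto
  then have "v = ev d" using assms by (auto simp: fun_eq_iff ev_def) (metis linorder_neqE_nat Suc_leI)
  then show ?thesis by simp
qed

lemma vec_d2: assumes "\<forall>k\<ge>Suc (Suc d). v k = 0" "\<forall>k<d. (v::nat\<Rightarrow>2) k = 0"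
  shows "v = 0 \<or> v = ev d \<or> v = ev (Suc d) \<or> v = ev d + ev (Suc d)"
proof -
  have v: "v = (\<lambda>k. if k = d then v d else if k = Suc d then v (Suc d) else 0)"
  proof
    fix k
    have "k < d \<or> k = d \<or> k = Suc d \<or> k \<ge> Suc (Suc d)" by linarith
    then show "v k = (if k = d then v d else if k = Suc d then v (Suc d) else 0)"
      using assms by auto
  qed
  have "v d = 0 \<or> v d = 1" "v (Suc d) = 0 \<or> v (Suc d) = 1" using ex2 by auto
  then show ?thesis
    by (elim disjE; subst v) (auto simp: fun_eq_iff ev_def)
qed

context cfg
begin

definition VB :: "(nat \<Rightarrow> 2) set" where
  "VB = (if B then {0, ev d, ev (Suc d), ev d + ev (Suc d)} else {})"
definition BASE :: "elt set set" where
  "BASE = (if B then baseB (ev d) (ev (Suc d)) else {{(ev d, 0), (0, 2), (ev d, 2)}})"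

lemma ev_ne: "ev d \<noteq> 0" "ev (Suc d) \<noteq> 0" "ev d \<noteq> ev (Suc d)"
  by (auto simp: ev_def fun_eq_iff dest: spec[of _ d])

lemma L0_A: assumes "\<not> B" shows "Ls m d 0 - {0} = {(ev d, 0), (0, 2), (ev d, 2)}"
proof
  have m: "m = Suc d" using mB assms by simp
  show "Ls m d 0 - {0} \<subseteq> {(ev d, 0), (0, 2), (ev d, 2)}"
  proof
    fix x assume x: "x \<in> Ls m d 0 - {0}"
    obtain v a where xv: "x = (v, a)" by (cases x)
    have "v = 0 \<or> v = ev d" using x xv m by (intro vec_d1) (auto simp: Ls_def Hs_mem)
    moreover have "a = 0 \<or> a = 2" using x xv by (auto simp: Ls_def Hs_mem)
    ultimately show "x \<in> {(ev d, 0), (0, 2), (ev d, 2)}" using x xv by (auto simp: zero_prod_def)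
  qed
  show "{(ev d, 0), (0, 2), (ev d, 2)} \<subseteq> Ls m d 0 - {0}"
    using m ev_ne by (auto simp: Ls_def Hs_mem ev_def zero_prod_def)
qed

lemma L0_B: assumes "B" shows "Ls m d 0 - {0} = {(ev d,0),(ev (Suc d),0),(ev d + ev (Suc d),0),(0,2),(ev d,2),(ev (Suc d),2),(ev d + ev (Suc d),2)}"
proof
  have m: "m = Suc (Suc d)" using mB assms by simp
  have ne: "ev d + ev (Suc d) \<noteq> 0" by (auto simp: ev_def fun_eq_iff dest: spec[of _ d])
  show "Ls m d 0 - {0} \<subseteq> {(ev d,0),(ev (Suc d),0),(ev d + ev (Suc d),0),(0,2),(ev d,2),(ev (Suc d),2),(ev d + ev (Suc d),2)}"
  proof
    fix x assume x: "x \<in> Ls m d 0 - {0}"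
    obtain v a where xv: "x = (v, a)" by (cases x)
    have "v = 0 \<or> v = ev d \<or> v = ev (Suc d) \<or> v = ev d + ev (Suc d)"
      using x xv m by (intro vec_d2) (auto simp: Ls_def Hs_mem)
    moreover have "a = 0 \<or> a = 2" using x xv by (auto simp: Ls_def Hs_mem)
    ultimately show "x \<in> {(ev d,0),(ev (Suc d),0),(ev d + ev (Suc d),0),(0,2),(ev d,2),(ev (Suc d),2),(ev d + ev (Suc d),2)}"
      using x xv by (auto simp: zero_prod_def)
  qed
  show "{(ev d,0),(ev (Suc d),0),(ev d + ev (Suc d),0),(0,2),(ev d,2),(ev (Suc d),2),(ev d + ev (Suc d),2)} \<subseteq> Ls m d 0 - {0}"
    using m ev_ne ne by (auto simp: Ls_def Hs_mem ev_def zero_prod_def)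
qed

lemma base_ok:
  "partition_on ((Ls m d 0 - {0}) \<union> \<Union>(pr ` VB)) BASE"
  "\<And>X. X \<in> BASE \<Longrightarrow> card X = 3 \<and> sum id X = 0"
  "finite BASE" "VB \<subseteq> Fn m" "\<And>v. v \<in> VB \<Longrightarrow> (v, 0) \<in> Ls m d 0"
  "card VB = (if B then 4 else 0)"
proof -
  show "partition_on ((Ls m d 0 - {0}) \<union> \<Union>(pr ` VB)) BASE"
  proof (cases B)
    case True
    have e: "(Ls m d 0 - {0}) \<union> \<Union>(pr ` VB) = {(ev d,0),(ev (Suc d),0),(ev d + ev (Suc d),0),(0,2),(ev d,2),(ev (Suc d),2),(ev d + ev (Suc d),2)} \<union> pr 0 \<union> pr (ev d) \<union> pr (ev (Suc d)) \<union> pr (ev d + ev (Suc d))"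
      unfolding L0_B[OF True] VB_def using True by auto
    show ?thesis unfolding e BASE_def using True BASEBL(1)[OF ev_ne] by simp
  next
    case False
    show ?thesis unfolding L0_A[OF False] VB_def BASE_def using False
      by (simp add: partition_on_space)
  qed
  show "\<And>X. X \<in> BASE \<Longrightarrow> card X = 3 \<and> sum id X = 0"
  proof -
    fix X assume X: "X \<in> BASE"
    show "card X = 3 \<and> sum id X = 0"
    proof (cases B)
      case True then show ?thesis using X BASEBL(2)[OF ev_ne] unfolding BASE_def by simp
    next
      case False
      then have "X = {(ev d, 0), (0, 2), (ev d, 2)}" using X unfolding BASE_def by simp
      then show ?thesis using ev_ne by (simp add: zero_prod_def)
    qed
  qed
  show "finite BASE" using BASEBL(3)[OF ev_ne] unfolding BASE_def by simp
  show "VB \<subseteq> Fn m" using mB by (auto simp: VB_def Fn_def ev_def)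
  show "\<And>v. v \<in> VB \<Longrightarrow> (v, 0) \<in> Ls m d 0"
    using mB by (auto simp: VB_def Ls_def Hs_mem ev_def split: if_splits)
  show "card VB = (if B then 4 else 0)"
  proof -
    have ne: "ev d + ev (Suc d) \<noteq> 0" "ev d + ev (Suc d) \<noteq> ev d" "ev d + ev (Suc d) \<noteq> ev (Suc d)"
      using ev_ne by (auto simp: ev_def fun_eq_iff dest: spec[of _ d] spec[of _ "Suc d"])
    show ?thesis using ev_ne ne ev_ne[symmetric] ne[symmetric] by (simp add: VB_def)
  qed
qed

end

lemma card2_le: "card {b, c} \<le> 2" by (cases "b = c") simp_all

lemma card3_dist: assumes c: "card {a, b, c} = 3" shows "a \<noteq> b \<and> a \<noteq> c \<and> b \<noteq> c"
proof (intro conjI notI)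
  assume "a = b" then have "card {a, b, c} = card {b, c}" by simp
  then show False using c card2_le[of b c] by simp
next
  assume "a = c" then have "card {a, b, c} = card {a, b}" by (simp add: insert_commute)
  then show False using c card2_le[of a b] by simp
next
  assume "b = c" then have "card {a, b, c} = card {a, b}" by simp
  then show False using c card2_le[of a b] by simp
qed

lemma tri_elem_sum: fixes d :: nat
  assumes x: "x \<in> Hs m" and S: "Sg d B x \<in> Hs m" and p: "p < m" and q: "q < m"
  shows "(x + Bv p) + (Sg d B x + Bv q) + (x + Sg d B x + (Bv p + Bv q)) = 0"
proof -
  have "(x + Bv p) + (Sg d B x + Bv q) + (x + Sg d B x + (Bv p + Bv q))
      = (x + x) + (Sg d B x + Sg d B x) + (Bv p + Bv p) + (Bv q + Bv q)"
    by (simp add: ac_simps)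
  also have "\<dots> = 0" using Hs_double[OF x] Hs_double[OF S] Hs_double[OF Bv_Hs[OF p]] Hs_double[OF Bv_Hs[OF q]]
    by simp
  finally show ?thesis .
qed

context cfg
begin

definition i0 :: nat where "i0 = d div 2 - 1"
definition C0 :: "elt set" where "C0 = Fn (2 * i0) \<times> {0}"
definition qa :: "elt \<Rightarrow> nat \<Rightarrow> 2" where "qa x = fst (x + Bv (2*i0))"
definition qb :: "elt \<Rightarrow> nat \<Rightarrow> 2" where "qb x = fst (Sg d B x + Bv (Suc (2*i0)))"
definition qc :: "elt \<Rightarrow> nat \<Rightarrow> 2" where "qc x = fst (x + Sg d B x + (Bv (2*i0) + Bv (Suc (2*i0))))"

lemma i0_lt: "i0 < d div 2" using d_ge by (simp add: i0_def)

lemma C0_sub: "C0 \<subseteq> Ls m d i0"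
proof
  fix x assume "x \<in> C0"
  then obtain v where xv: "x = (v, 0)" "v \<in> Fn (2*i0)" by (auto simp: C0_def)
  have "2 * i0 < m" using j_facts(4)[OF i0_lt] .
  then show "x \<in> Ls m d i0" using xv by (auto simp: Ls_def Hs_mem Fn_def)
qed

lemma C0_finite: "finite C0" by (simp add: C0_def Fn_finite)
lemma C0_card: "card C0 = 2 ^ (2 * i0)" by (simp add: C0_def Fn_card card_cartesian_product)

lemma tri_snd: assumes x: "x \<in> C0" and z: "z \<in> tri d B i0 x" shows "snd z = 0"
proof -
  obtain v where xv: "x = (v, 0)" "v \<in> Fn (2*i0)" using x by (auto simp: C0_def)
  have "2 * i0 \<le> d" "2 * i0 \<le> Suc d" using j_facts(2)[OF i0_lt] by auto
  then have "v d = 0" "v (Suc d) = 0" using xv(2) by (auto simp: Fn_def)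
  then have "snd (Sg d B x) = 0" using xv by (simp add: Sg_def sga_def abit_def obit_def)
  then show ?thesis using z xv by (auto simp: tri_def Bv_def)
qed

lemma tri_eq: assumes x: "x \<in> C0" shows "tri d B i0 x = {(qa x, 0), (qb x, 0), (qc x, 0)}"
proof -
  have ha: "x + Bv (2*i0) = (qa x, 0)"
    using tri_snd[OF x, of "x + Bv (2*i0)"] by (simp add: tri_def qa_def prod_eq_iff)
  have hb: "Sg d B x + Bv (Suc (2*i0)) = (qb x, 0)"
    using tri_snd[OF x, of "Sg d B x + Bv (Suc (2*i0))"] by (simp add: tri_def qb_def prod_eq_iff)
  have hc: "x + Sg d B x + (Bv (2*i0) + Bv (Suc (2*i0))) = (qc x, 0)"
    using tri_snd[OF x, of "x + Sg d B x + (Bv (2*i0) + Bv (Suc (2*i0)))"]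
    by (simp add: tri_def qc_def prod_eq_iff)
  show ?thesis by (simp only: tri_def ha hb hc)
qed

lemma q_props: assumes x: "x \<in> C0"
  shows "qa x \<noteq> qb x" "qa x \<noteq> qc x" "qb x \<noteq> qc x" "qa x + qb x + qc x = 0"
proof -
  have xL: "x \<in> Ls m d i0" using x C0_sub by blast
  have c: "card {(qa x, 0::4), (qb x, 0), (qc x, 0)} = 3" using tri_card[OF xL i0_lt] tri_eq[OF x] by simp
  show "qa x \<noteq> qb x" "qa x \<noteq> qc x" "qb x \<noteq> qc x" using card3_dist[OF c] by auto
  have xH: "x \<in> Hs m" using xL by (simp add: Ls_def)
  have "fst ((x + Bv (2*i0)) + (Sg d B x + Bv (Suc (2*i0))) + (x + Sg d B x + (Bv (2*i0) + Bv (Suc (2*i0))))) = 0"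
    using tri_elem_sum[OF xH Sg_Hs[OF xH] j_facts(4)[OF i0_lt] j_facts(3)[OF i0_lt]] by simp
  then show "qa x + qb x + qc x = 0" unfolding qa_def qb_def qc_def by simp
qed

definition vp :: "elt \<Rightarrow> (nat \<Rightarrow> 2) set" where "vp x = {qa x, qb x, qc x}"
definition region :: "elt \<Rightarrow> elt set" where
  "region x = tri d B i0 x \<union> pr (qa x) \<union> pr (qb x) \<union> pr (qc x)"

lemma region_part: "x \<in> C0 \<Longrightarrow> partition_on (region x) (mixf (qa x) (qb x) (qc x))"
  unfolding region_def using MIXL(1)[OF q_props] tri_eq by simp

lemma vp_card: "x \<in> C0 \<Longrightarrow> card (vp x) = 3"
  using q_props[of x] by (simp add: vp_def)

lemma vp_tri: "x \<in> C0 \<Longrightarrow> q \<in> vp x \<longleftrightarrow> (q, 0) \<in> tri d B i0 x"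
  using tri_eq[of x] by (auto simp: vp_def)

lemma vp_disj: assumes "x \<in> C0" "y \<in> C0" "x \<noteq> y" shows "vp x \<inter> vp y = {}"
proof -
  have "(q, 0) \<notin> tri d B i0 y" if "(q,0) \<in> tri d B i0 x" for q
    using tri_disj[OF _ _ i0_lt, of x y] assms C0_sub that by blast
  then show ?thesis using vp_tri assms by blast
qed

lemma tri_notL0: assumes "x \<in> C0" "z \<in> tri d B i0 x" shows "z \<notin> Ls m d 0" "z \<in> Hs m"
proof -
  have "z \<in> Ls m d (Suc i0) - Ls m d i0" using tri_sub[OF _ i0_lt] assms C0_sub by blast
  then show "z \<notin> Ls m d 0" "z \<in> Hs m" using Ls_mono[of 0 i0 m d] by (auto simp: Ls_def)
qed

lemma vp_VB: assumes x: "x \<in> C0" shows "vp x \<inter> VB = {}"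
proof (rule ccontr)
  assume "vp x \<inter> VB \<noteq> {}"
  then obtain q where q: "q \<in> vp x" "q \<in> VB" by blast
  have "(q, 0) \<in> tri d B i0 x" using q(1) vp_tri[OF x] by blast
  then have "(q, 0) \<notin> Ls m d 0" using tri_notL0(1)[OF x] by blast
  then show False using base_ok(5)[OF q(2)] by blast
qed

lemma vp_Fn: assumes x: "x \<in> C0" shows "vp x \<subseteq> Fn m"
proof
  fix q assume "q \<in> vp x"
  then have "(q, 0) \<in> tri d B i0 x" using vp_tri[OF x] by blast
  then have "(q, 0) \<in> Hs m" using tri_notL0(2)[OF x] by blast
  then show "q \<in> Fn m" by (simp add: Hs_def)
qed

lemma region_disj: assumes "x \<in> C0" "y \<in> C0" "x \<noteq> y" shows "region x \<inter> region y = {}"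
proof -
  have t: "tri d B i0 x \<inter> tri d B i0 y = {}"
    using tri_disj[OF _ _ i0_lt, of x y] assms C0_sub by blast
  have v: "vp x \<inter> vp y = {}" using vp_disj[OF assms] .
  have r: "region x = tri d B i0 x \<union> (vp x \<times> {1,3})" for x
    by (auto simp: region_def pr_def vp_def)
  have s: "snd z = 0" if "z \<in> tri d B i0 x \<or> z \<in> tri d B i0 y" for z
    using tri_snd assms that by blast
  have a1: "tri d B i0 x \<inter> (vp y \<times> {1,3}) = {}"
  proof -
    { fix z assume z: "z \<in> tri d B i0 x" "z \<in> vp y \<times> {1,3}"
      have "snd z = 0" using tri_snd[OF assms(1) z(1)] .
      moreover have "snd z \<in> {1,3}" using z(2) by auto
      ultimately have False by simp }
    then show ?thesis by blast
  qed
  have a2: "(vp x \<times> {1,3}) \<inter> tri d B i0 y = {}"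
  proof -
    { fix z assume z: "z \<in> tri d B i0 y" "z \<in> vp x \<times> {1,3}"
      have "snd z = 0" using tri_snd[OF assms(2) z(1)] .
      moreover have "snd z \<in> {1,3}" using z(2) by auto
      ultimately have False by simp }
    then show ?thesis by blast
  qed
  have a3: "(vp x \<times> {1,3}) \<inter> (vp y \<times> ({1,3}::4 set)) = {}" using v by blast
  show ?thesis unfolding r using t a1 a2 a3 by blast
qed

end

context cfg
begin

lemma pr_inj_on: "inj_on pr A"
  by (rule inj_onI) (auto simp: pr_def doubleton_eq_iff)

lemma final_cfg: assumes C: "C \<subseteq> C0"
  shows "\<exists>P. partition_on (Gm m - {0}) P \<and> (\<forall>X\<in>P. sum id X = 0) \<and> (\<forall>X\<in>P. card X = 2 \<or> card X = 3)
    \<and> card {X\<in>P. card X = 2} = 2 ^ m - (3 * card C + card VB)"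
proof -
  have finC: "finite C" using C C0_finite finite_subset by blast
  have CL: "C \<subseteq> Ls m d i0" using C C0_sub by blast
  define L0 where "L0 = Ls m d 0"
  define GEN where "GEN = (\<Union>i<d div 2. tri d B i ` Ls m d i)"
  define PAIRS where "PAIRS = pr ` Fn m"
  define O4 where "O4 = Fn m \<times> ({1,3} :: 4 set)"
  define S1 where "S1 = (Hs m - L0) \<union> O4"
  have P_GEN: "partition_on (Hs m - L0) GEN"
    using gen_part[of "d div 2"] Ls_top unfolding GEN_def L0_def by simp
  have GEN3: "card X = 3 \<and> sum id X = 0" if XG: "X \<in> GEN" for X
  proof -
    obtain i x where "i < d div 2" "x \<in> Ls m d i" "X = tri d B i x" using XG unfolding GEN_def by blast
    then show ?thesis using tri_card tri_sum by simp
  qed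
  have U_PAIRS: "\<Union>PAIRS = O4" by (auto simp: PAIRS_def O4_def pr_def)
  have P_PAIRS: "partition_on O4 PAIRS"
    unfolding U_PAIRS[symmetric] unfolding PAIRS_def by (rule PIMG) (auto simp: pr_def)
  have PAIRS2: "card X = 2 \<and> sum id X = 0" if "X \<in> PAIRS" for X
    using that pr_card pr_sum by (auto simp: PAIRS_def)
  have HO: "Hs m \<inter> O4 = {}" by (auto simp: Hs_def O4_def)
  have L0H: "L0 \<subseteq> Hs m" by (auto simp: L0_def Ls_def)
  have P1: "partition_on S1 (GEN \<union> PAIRS)" unfolding S1_def
    by (rule PU[OF P_GEN P_PAIRS]) (use HO in blast)
  define VC where "VC = (\<Union>x\<in>C. vp x)"
  define Q where "Q = tri d B i0 ` C \<union> pr ` (VC \<union> VB)"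
  have VCF: "VC \<subseteq> Fn m" using vp_Fn C unfolding VC_def by blast
  have VBF: "VB \<subseteq> Fn m" by (rule base_ok(4))
  have QP: "Q \<subseteq> GEN \<union> PAIRS"
  proof -
    have "tri d B i0 ` C \<subseteq> GEN" unfolding GEN_def using CL i0_lt by blast
    moreover have "pr ` (VC \<union> VB) \<subseteq> PAIRS" unfolding PAIRS_def using VCF VBF by blast
    ultimately show ?thesis unfolding Q_def by blast
  qed
  have P2: "partition_on (S1 - \<Union>Q) ((GEN \<union> PAIRS) - Q)" by (rule PDIFF[OF P1 QP])
  define MIX where "MIX = (\<Union>x\<in>C. mixf (qa x) (qb x) (qc x))"
  define RC where "RC = (\<Union>x\<in>C. region x)"
  have P3: "partition_on RC MIX" unfolding RC_def MIX_def
  proof (rule PUN)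
    show "\<And>i. i \<in> C \<Longrightarrow> partition_on (region i) (mixf (qa i) (qb i) (qc i))"
      using region_part C by blast
    show "\<And>i j. i \<in> C \<Longrightarrow> j \<in> C \<Longrightarrow> i \<noteq> j \<Longrightarrow> region i \<inter> region j = {}"
      using region_disj C by blast
  qed
  have P_BASE: "partition_on ((L0 - {0}) \<union> \<Union>(pr ` VB)) BASE" using base_ok(1) by (simp add: L0_def)
  have D4: "RC \<inter> ((L0 - {0}) \<union> \<Union>(pr ` VB)) = {}"
  proof -
    { fix z assume z1: "z \<in> RC" and z2: "z \<in> (L0 - {0}) \<union> \<Union>(pr ` VB)"
      obtain x where x: "x \<in> C" "z \<in> region x" using z1 unfolding RC_def by blast
      have xC0: "x \<in> C0" using x C by blast
      have False
      proof (cases "z \<in> tri d B i0 x")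
        case True
        then have "z \<notin> L0" "snd z = 0" using tri_notL0(1)[OF xC0] tri_snd[OF xC0] by (auto simp: L0_def)
        then show False using z2 by (auto simp: pr_def)
      next
        case False
        then obtain q where q: "q \<in> vp x" "z \<in> pr q" using x(2) by (auto simp: region_def vp_def)
        then have "snd z \<in> {1,3}" by (auto simp: pr_def)
        then have "z \<notin> L0" using L0H by (auto simp: Hs_def)
        then obtain v where v: "v \<in> VB" "z \<in> pr v" using z2 by blast
        then have "q = v" using q pr_inj by blast
        then show False using vp_VB[OF xC0] q v by blast
      qed }
    then show ?thesis by blast
  qed
  have P4: "partition_on (RC \<union> ((L0 - {0}) \<union> \<Union>(pr ` VB))) (MIX \<union> BASE)"
    by (rule PU[OF P3 P_BASE D4])
  have UQ: "\<Union>Q = RC \<union> \<Union>(pr ` VB)"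
  proof -
    have r: "region x = tri d B i0 x \<union> \<Union>(pr ` vp x)" for x by (auto simp: region_def vp_def)
    show ?thesis by (auto simp: Q_def RC_def r VC_def)
  qed
  have QS1: "\<Union>Q \<subseteq> S1"
  proof
    fix z assume "z \<in> \<Union>Q"
    then consider x where "x \<in> C" "z \<in> tri d B i0 x" | v where "v \<in> VC \<union> VB" "z \<in> pr v"
      unfolding Q_def by blast
    then show "z \<in> S1"
    proof cases
      case 1 then show ?thesis using tri_notL0[of x z] C by (auto simp: S1_def L0_def)
    next
      case 2 then show ?thesis using VCF VBF by (auto simp: S1_def O4_def pr_def)
    qed
  qed
  have L0S1: "S1 \<inter> (L0 - {0}) = {}" using HO L0H unfolding S1_def by blast
  have D5: "(S1 - \<Union>Q) \<inter> (RC \<union> ((L0 - {0}) \<union> \<Union>(pr ` VB))) = {}" using UQ L0S1 by blast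
  have P5: "partition_on ((S1 - \<Union>Q) \<union> (RC \<union> ((L0 - {0}) \<union> \<Union>(pr ` VB))))
      (((GEN \<union> PAIRS) - Q) \<union> (MIX \<union> BASE))"
    by (rule PU[OF P2 P4 D5])
  have zL0: "0 \<in> L0" using zero_Hs[of m] by (simp add: L0_def Ls_def)
  have SET0: "S1 \<union> (L0 - {0}) = Gm m - {0}"
  proof
    show "S1 \<union> (L0 - {0}) \<subseteq> Gm m - {0}"
      using L0H Hs_sub zL0 by (auto simp: S1_def O4_def Gm_eq zero_prod_def)
    show "Gm m - {0} \<subseteq> S1 \<union> (L0 - {0})"
    proof
      fix z assume z: "z \<in> Gm m - {0}"
      obtain v a where zv: "z = (v, a)" by (cases z)
      have v: "v \<in> Fn m" using z zv by (simp add: Gm_eq)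
      consider "a = 0 \<or> a = 2" | "a = 1 \<or> a = 3" using ex4[of a] by blast
      then show "z \<in> S1 \<union> (L0 - {0})"
      proof cases
        case 1 then have "z \<in> Hs m" using v zv by (auto simp: Hs_def)
        then show ?thesis using z by (auto simp: S1_def)
      next
        case 2 then show ?thesis using v zv by (auto simp: S1_def O4_def)
      qed
    qed
  qed
  have SET: "(S1 - \<Union>Q) \<union> (RC \<union> ((L0 - {0}) \<union> \<Union>(pr ` VB))) = Gm m - {0}"
    using UQ QS1 SET0 by blast
  define P where "P = ((GEN \<union> PAIRS) - Q) \<union> (MIX \<union> BASE)"
  have MIX3: "card X = 3 \<and> sum id X = 0" if XM: "X \<in> MIX" for X
  proof -
    obtain x where "x \<in> C" "X \<in> mixf (qa x) (qb x) (qc x)" using XM unfolding MIX_def by blast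
    then show ?thesis using MIXL(2)[OF q_props[of x]] C by blast
  qed
  have BASE3: "card X = 3 \<and> sum id X = 0" if "X \<in> BASE" for X using base_ok(2) that by blast
  have blk: "\<forall>X\<in>P. sum id X = 0" "\<forall>X\<in>P. card X = 2 \<or> card X = 3"
    using GEN3 PAIRS2 MIX3 BASE3 unfolding P_def by blast+
  have P2eq: "{X\<in>P. card X = 2} = pr ` (Fn m - (VC \<union> VB))"
  proof
    show "{X\<in>P. card X = 2} \<subseteq> pr ` (Fn m - (VC \<union> VB))"
    proof
      fix X assume X: "X \<in> {X\<in>P. card X = 2}"
      have "X \<notin> GEN" "X \<notin> MIX" "X \<notin> BASE" using X GEN3 MIX3 BASE3 by auto
      then have "X \<in> PAIRS - Q" using X unfolding P_def by blast
      then obtain v where v: "v \<in> Fn m" "X = pr v" "pr v \<notin> Q" unfolding PAIRS_def by blast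
      then have "v \<notin> VC \<union> VB" unfolding Q_def by blast
      then show "X \<in> pr ` (Fn m - (VC \<union> VB))" using v by blast
    qed
    show "pr ` (Fn m - (VC \<union> VB)) \<subseteq> {X\<in>P. card X = 2}"
    proof
      fix X assume "X \<in> pr ` (Fn m - (VC \<union> VB))"
      then obtain v where v: "v \<in> Fn m" "v \<notin> VC \<union> VB" "X = pr v" by blast
      have c2: "card X = 2" using v pr_card by simp
      have "X \<notin> tri d B i0 ` C"
      proof
        assume "X \<in> tri d B i0 ` C"
        then obtain x where "x \<in> C" "X = tri d B i0 x" by blast
        then have "card X = 3" using tri_card[OF _ i0_lt] CL by blast
        then show False using c2 by simp
      qed
      moreover have "X \<notin> pr ` (VC \<union> VB)"
      proof
        assume "X \<in> pr ` (VC \<union> VB)"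
        then obtain w where "w \<in> VC \<union> VB" "pr v = pr w" using v by blast
        then have "v = w" using inj_onD[OF pr_inj_on[of UNIV]] by blast
        then show False using v \<open>w \<in> VC \<union> VB\<close> by blast
      qed
      ultimately have "X \<notin> Q" unfolding Q_def by blast
      then show "X \<in> {X\<in>P. card X = 2}" using v c2 unfolding P_def PAIRS_def by blast
    qed
  qed
  have VCc: "card VC = 3 * card C"
  proof -
    have "card VC = (\<Sum>x\<in>C. card (vp x))" unfolding VC_def
    proof (rule card_UN_disjoint[OF finC])
      show "\<forall>i\<in>C. finite (vp i)" by (simp add: vp_def)
      show "\<forall>i\<in>C. \<forall>j\<in>C. i \<noteq> j \<longrightarrow> vp i \<inter> vp j = {}" using vp_disj C by blast
    qed
    also have "\<dots> = (\<Sum>x\<in>C. 3)" using vp_card C by (intro sum.cong) auto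
    finally show ?thesis by simp
  qed
  have VCB: "VC \<inter> VB = {}" using vp_VB C unfolding VC_def by blast
  have finVCB: "finite VC" "finite VB" using VCF VBF Fn_finite finite_subset by blast+
  have "card {X\<in>P. card X = 2} = card (Fn m - (VC \<union> VB))"
    unfolding P2eq by (rule card_image[OF pr_inj_on])
  also have "\<dots> = card (Fn m) - card (VC \<union> VB)"
    using VCF VBF finVCB by (intro card_Diff_subset) auto
  also have "card (VC \<union> VB) = card VC + card VB" using finVCB VCB by (rule card_Un_disjoint)
  finally have cnt: "card {X\<in>P. card X = 2} = 2 ^ m - (3 * card C + card VB)"
    using VCc Fn_card by simp
  have "partition_on (Gm m - {0}) P" using P5 SET unfolding P_def by simp
  then show ?thesis using blk cnt by blast
qed

end

lemma case_gen:
  assumes cf: "cfg m d B" and k: "k \<le> 2 ^ (2 * (d div 2 - 1))"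
    and t: "t = 3 * k + (if B then 4 else 0)" and tN: "t \<le> 2 ^ m"
    and md: "(card (I_set (Gm m)) + 2 * t) mod 3 = 0"
  shows "zero_sum_partition (Gm m - {0})
       (replicate_mset (f_val (Gm m) - t) 2
        + replicate_mset ((card (I_set (Gm m)) + 2 * t) div 3) 3)"
proof -
  have "k \<le> card (cfg.C0 d)" using cfg.C0_card[OF cf] k by (simp add: cfg.i0_def[OF cf])
  then obtain C where C: "C \<subseteq> cfg.C0 d" "card C = k" "finite C" by (rule obtain_subset_with_card_n)
  obtain P where P: "partition_on (Gm m - {0}) P" "\<forall>X\<in>P. sum id X = 0" "\<forall>X\<in>P. card X = 2 \<or> card X = 3"
    "card {X\<in>P. card X = 2} = 2 ^ m - (3 * card C + card (cfg.VB d B))"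
    using cfg.final_cfg[OF cf C(1)] by blast
  have cVB: "card (cfg.VB d B) = (if B then 4 else 0)" using cfg.base_ok(6)[OF cf] .
  have p: "card {X\<in>P. card X = 2} = f_val (Gm m) - t" using P(4) C(2) cVB t by (simp add: f_val_Gm)
  have I: "card (I_set (Gm m)) = 2 * 2 ^ m - 1" using I_card[of m] by simp
  have z: "0 \<in> Gm m" by (simp add: Gm_eq Fn_def zero_prod_def)
  have cS: "card (Gm m - {0}) = 4 * 2 ^ m - 1"
    using Gm_card[of m] z Gm_finite[of m] by (simp add: power_add)
  have pos: "1 \<le> (2::nat) ^ m" by simp
  have q3: "3 * ((card (I_set (Gm m)) + 2 * t) div 3) = card (I_set (Gm m)) + 2 * t"
    using md by presburger
  have "2 * (f_val (Gm m) - t) + 3 * ((card (I_set (Gm m)) + 2 * t) div 3) = card (Gm m - {0})"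
    unfolding q3 using tN pos I cS f_val_Gm[of m] by arith
  moreover have fS: "finite (Gm m - {0})" by (simp add: Gm_finite)
  ultimately show ?thesis using zsp_from[OF fS P(1) P(2) P(3) p] by blast
qed

lemma pow2_mod3: "(2::nat) ^ n mod 3 = (if even n then 1 else 2)"
proof (induct n)
  case 0 then show ?case by simp
next
  case (Suc n)
  have "(2::nat) ^ Suc n mod 3 = (2 * (2 ^ n mod 3)) mod 3" by (simp add: mod_mult_right_eq)
  then show ?case using Suc by (cases "even n") simp_all
qed

theorem lemma6p33:
  shows "\<exists>m0::nat. \<forall>m\<ge>m0. \<forall>t::nat.
     3 \<le> t \<and> real t \<le> real (f_val (Gm m)) / 1000
     \<and> (card (I_set (Gm m)) + 2 * t) mod 3 = 0 \<longrightarrow>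
     zero_sum_partition (Gm m - {0})
       (replicate_mset (f_val (Gm m) - t) 2
        + replicate_mset ((card (I_set (Gm m)) + 2 * t) div 3) 3)"
proof (intro exI[of _ 4] allI impI)
  fix m t :: nat
  assume m: "4 \<le> m" and h: "3 \<le> t \<and> real t \<le> real (f_val (Gm m)) / 1000
     \<and> (card (I_set (Gm m)) + 2 * t) mod 3 = 0"
  have t3: "3 \<le> t" and tr: "real t \<le> real (2 ^ m) / 1000"
    and md: "(card (I_set (Gm m)) + 2 * t) mod 3 = 0" using h by (simp_all add: f_val_Gm)
  have "1000 * real t \<le> real (2 ^ m)" using tr by simp
  then have t1000: "1000 * t \<le> 2 ^ m" by (simp only: of_nat_le_iff[symmetric] of_nat_mult)
  have pm: "(2::nat) ^ m = 16 * 2 ^ (m - 4)"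
  proof -
    have "(2::nat) ^ m = 2 ^ (4 + (m - 4))" using m by simp
    then show ?thesis by (simp add: power_add)
  qed
  have t16: "t \<le> 2 ^ (m - 4)" using t1000 pm by linarith
  have tN: "t \<le> 2 ^ m" using t1000 by linarith
  have I: "card (I_set (Gm m)) = 2 ^ Suc m - 1" using I_card[of m] by simp
  have X1: "1 \<le> (2::nat) ^ Suc m" by simp
  show "zero_sum_partition (Gm m - {0})
       (replicate_mset (f_val (Gm m) - t) 2
        + replicate_mset ((card (I_set (Gm m)) + 2 * t) div 3) 3)"
  proof (cases "even m")
    case False
    define d where "d = m - 1"
    have cf: "cfg m d False" unfolding cfg_def d_def using m False by auto
    have "2 ^ Suc m mod 3 = (1::nat)" using pow2_mod3[of "Suc m"] False by simp
    then have "t mod 3 = 0" using md X1 unfolding I by presburger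
    then have tk: "t = 3 * (t div 3) + (if False then 4 else 0)" by presburger
    have e: "2 * (d div 2 - 1) = m - 3" unfolding d_def using False m by presburger
    have p43: "(2::nat) ^ (m - 4) \<le> 2 ^ (m - 3)" by (rule power_increasing) auto
    have "t div 3 \<le> 2 ^ (m - 3)" using div_le_dividend[of t 3] t16 p43 by linarith
    then have "t div 3 \<le> 2 ^ (2 * (d div 2 - 1))" unfolding e .
    then show ?thesis using case_gen[OF cf _ tk tN md] by blast
  next
    case True
    define d where "d = m - 2"
    have cf: "cfg m d True" unfolding cfg_def d_def using m True by auto
    have "2 ^ Suc m mod 3 = (2::nat)" using pow2_mod3[of "Suc m"] True by simp
    then have "t mod 3 = 1" using md X1 unfolding I by presburger
    then have tk: "t = 3 * ((t - 4) div 3) + (if True then 4 else 0)" using t3 by presburger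
    have "2 * (d div 2 - 1) = m - 4" unfolding d_def using True m by presburger
    then have "(t - 4) div 3 \<le> 2 ^ (2 * (d div 2 - 1))" using t16 by simp
    then show ?thesis using case_gen[OF cf _ tk tN md] by blast
  qed
qed

end
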